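(* Let $F$ be a field, $V$ a nonzero vector space over $F$, $\Gamma$ a nonempty set and $\varphi:\Gamma\to\Gamma$ a map. Let $\sigma_\varphi:V^\Gamma\to V^\Gamma$, $(x_\alpha)_{\alpha\in\Gamma}\mapsto(x_{\varphi(\alpha)})_{\alpha\in\Gamma}$. Then \[{\rm Eigen}(\sigma_\varphi,V^\Gamma)=\begin{cases} \{r\in F\setminus\{0\}: \exists\theta\in P(\varphi)\ \ o(r)\mid per(\theta)\}, & W(\varphi)=\varnothing,\ \Gamma=\varphi(\Gamma),\\ \{r\in F\setminus\{0\}: \exists\theta\in P(\varphi)\ \ o(r)\mid per(\theta)\}\cup\{0\}, & W(\varphi)=\varnothing,\ \Gamma\neq\varphi(\Gamma),\\ F\setminus\{0\}, & W(\varphi)\neq\varnothing,\ \Gamma=\varphi(\Gamma),\\ F, & W(\varphi)\neq\varnothing,\ \Gamma\neq\varphi(\Gamma), \end{cases}\] where for $r\in F\setminus\{0\}$, $o(r)$ is the order of $r$ in the multiplicative group $F\setminus\{0\}$ (the condition $o(r)\mid per(\theta)$ meaning $r$ has finite order dividing $per(\theta)$).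
   Context: For a linear map $T:W\to W$ on an $F$-vector space $W$, ${\rm Eigen}(T,W)$ is the set of all $r\in F$ such that $T(x)=rx$ for some nonzero $x\in W$. A point $a\in\Gamma$ is wandering if the sequence $(\varphi^n(a))_{n\geq1}$ is one-to-one; $W(\varphi)$ is the set of wandering points. $a$ is periodic if $\varphi^n(a)=a$ for some $n\geq1$; $P(\varphi)$ is the set of periodic points, and for $\alpha\in P(\varphi)$, $per(\alpha)=\min\{n\geq1:\varphi^n(\alpha)=\alpha\}$. *)

theory Defs
  imports Main HOL.Vector_Spaces "HOL-Library.Function_Algebras"
begin

definition Eigen :: "('f \<Rightarrow> 'w::zero \<Rightarrow> 'w) \<Rightarrow> ('w \<Rightarrow> 'w) \<Rightarrow> 'w set \<Rightarrow> ('f::field) set" where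
  "Eigen scale T W = {r. \<exists>x\<in>W. x \<noteq> 0 \<and> T x = scale r x}"

text \<open>The shift sigma_phi on V^Gamma (Gamma = the universe of type 'a).\<close>
definition sigma :: "('a \<Rightarrow> 'a) \<Rightarrow> ('a \<Rightarrow> 'v) \<Rightarrow> ('a \<Rightarrow> 'v)" where
  "sigma \<phi> x = (\<lambda>\<alpha>. x (\<phi> \<alpha>))"

definition fun_scale :: "('f \<Rightarrow> 'v \<Rightarrow> 'v) \<Rightarrow> 'f \<Rightarrow> ('a \<Rightarrow> 'v) \<Rightarrow> ('a \<Rightarrow> 'v)" where
  "fun_scale scale r x = (\<lambda>\<alpha>. scale r (x \<alpha>))"

definition wandering :: "('a \<Rightarrow> 'a) \<Rightarrow> 'a \<Rightarrow> bool" where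
  "wandering \<phi> a \<longleftrightarrow> inj_on (\<lambda>n::nat. (\<phi> ^^ n) a) {1..}"

definition wandering_points :: "('a \<Rightarrow> 'a) \<Rightarrow> 'a set" where
  "wandering_points \<phi> = {a. wandering \<phi> a}"

definition periodic_points :: "('a \<Rightarrow> 'a) \<Rightarrow> 'a set" where
  "periodic_points \<phi> = {a. \<exists>n::nat. n \<ge> 1 \<and> (\<phi> ^^ n) a = a}"

definition per :: "('a \<Rightarrow> 'a) \<Rightarrow> 'a \<Rightarrow> nat" where
  "per \<phi> \<alpha> = (LEAST n. n \<ge> 1 \<and> (\<phi> ^^ n) \<alpha> = \<alpha>)"

text \<open>Order of r in the multiplicative group F - {0}; 0 encodes infinite order.\<close>
definition mult_order :: "'f::field \<Rightarrow> nat" where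
  "mult_order r = (if \<exists>n::nat. n \<ge> 1 \<and> r ^ n = 1 then (LEAST n. n \<ge> 1 \<and> r ^ n = 1) else 0)"

definition periodic_eigs :: "('a \<Rightarrow> 'a) \<Rightarrow> 'f::field set" where
  "periodic_eigs \<phi> = {r. r \<noteq> 0 \<and> (\<exists>\<theta>\<in>periodic_points \<phi>.
       mult_order r \<noteq> 0 \<and> mult_order r dvd per \<phi> \<theta>)}"

end

theory Submission
  imports Defs
begin

lemma eig_iter:
  assumes vs: "vector_space scale"
    and e: "\<And>\<alpha>. x (\<phi> \<alpha>) = scale r (x \<alpha>)"
  shows "x ((\<phi> ^^ n) \<alpha>) = scale (r ^ n) (x \<alpha>)"
proof -
  have md: "module scale" using vs by (simp add: module_def vector_space_def)
  show ?thesis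
proof (induction n)
  case 0
  then show ?case using module.scale_one[OF md] by fastforce
next
  case (Suc n)
  have "x ((\<phi> ^^ Suc n) \<alpha>) = scale r (x ((\<phi> ^^ n) \<alpha>))" using e by simp
  also have "\<dots> = scale (r ^ Suc n) (x \<alpha>)" using Suc
    module.scale_scale[OF md] by simp
  finally show ?case .
qed
qed

lemma fp:
  fixes f :: "'a \<Rightarrow> 'a" and m n :: nat and x :: 'a
  shows "(f^^m) ((f^^n) x) = (f^^(m+n)) x"
  by (simp add: funpow_add)

lemma construct:
  fixes scale :: "'f::field \<Rightarrow> 'v::ab_group_add \<Rightarrow> 'v"
    and \<phi> :: "'a \<Rightarrow> 'a"
  and v :: 'v
  assumes vs: "vector_space scale" and v: "v \<noteq> 0" and r: "r \<noteq> 0"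
    and C: "\<And>i j. (\<phi>^^i) a = (\<phi>^^j) a \<Longrightarrow> r^i = r^j"
  shows "r \<in> Eigen (fun_scale scale) (sigma \<phi>) UNIV"
proof -
  have md: "module scale" using vs by (simp add: module_def vector_space_def)
  define P where "P \<beta> p = ((\<phi>^^fst p) \<beta> = (\<phi>^^snd p) a)" for \<beta> p
  define x where "x \<beta> = (if \<exists>p. P \<beta> p then
     scale (r powi (int (snd (SOME p. P \<beta> p)) - int (fst (SOME p. P \<beta> p)))) v else 0)" for \<beta>
  have wd: "r powi (int k - int m) = r powi (int k' - int m')"
    if "P \<beta> (m,k)" "P \<beta> (m',k')" for \<beta> m k m' k'
  proof -
    have "(\<phi>^^(k+m')) a = (\<phi>^^m') ((\<phi>^^k) a)" using fp[where f=\<phi> and m="m'" and n="k" and x="a"] by (simp add: add.commute)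
    also have "\<dots> = (\<phi>^^(m'+m)) \<beta>" using that(1) fp[where f=\<phi> and m="m'" and n="m" and x="\<beta>"] by (simp add: P_def)
    also have "\<dots> = (\<phi>^^m) ((\<phi>^^m') \<beta>)" using fp[where f=\<phi> and m="m" and n="m'" and x="\<beta>"] by (simp add: add.commute)
    also have "\<dots> = (\<phi>^^(k'+m)) a" using that(2) fp[where f=\<phi> and m="m" and n="k'" and x="a"] by (simp add: P_def add.commute)
    finally have "r^(k+m') = r^(k'+m)" by (rule C)
    hence eq: "r^k * r^m' = r^k' * r^m" by (simp add: power_add)
    have "r powi (int k - int m) = r^k / r^m" by (simp add: power_int_diff r)
    also have "\<dots> = r^k' / r^m'" using eq r by (simp add: field_simps)
    also have "\<dots> = r powi (int k' - int m')" by (simp add: power_int_diff r)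
    finally show ?thesis .
  qed
  have val: "x \<beta> = scale (r powi (int k - int m)) v" if "P \<beta> (m,k)" for \<beta> m k
  proof -
    have ex: "\<exists>p. P \<beta> p" using that by blast
    obtain m' k' where s: "(SOME p. P \<beta> p) = (m',k')" by fastforce
    have "P \<beta> (m',k')" using someI_ex[OF ex] s by simp
    then show ?thesis using ex s wd[OF that] unfolding x_def by simp
  qed
  have step: "x (\<phi> \<beta>) = scale r (x \<beta>)" for \<beta>
  proof (cases "\<exists>p. P \<beta> p")
    case True
    then obtain m k where p: "P \<beta> (m,k)" by auto
    have sw: "(\<phi>^^m) (\<phi> \<beta>) = \<phi> ((\<phi>^^m) \<beta>)" by (rule funpow_swap1[symmetric])
    have p2: "P (\<phi> \<beta>) (m, Suc k)" using p unfolding P_def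
      by (simp add: sw)
    have "x (\<phi> \<beta>) = scale (r powi (int (Suc k) - int m)) v" using val[OF p2] .
    also have "r powi (int (Suc k) - int m) = r * r powi (int k - int m)"
    proof -
      have e1: "int (Suc k) - int m = 1 + (int k - int m)" by simp
      have "r powi (1 + (int k - int m)) = r powi 1 * r powi (int k - int m)"
        using power_int_add[of r 1 "int k - int m"] r by blast
      then show ?thesis unfolding e1 by simp
    qed
    finally show ?thesis using val[OF p] module.scale_scale[OF md] by simp
  next
    case False
    have "\<not> (\<exists>p. P (\<phi> \<beta>) p)"
    proof
      assume "\<exists>p. P (\<phi> \<beta>) p"
      then obtain m k where "P (\<phi> \<beta>) (m,k)" by auto
      moreover have sw: "(\<phi>^^m) (\<phi> \<beta>) = \<phi> ((\<phi>^^m) \<beta>)" by (rule funpow_swap1[symmetric])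
      ultimately have "P \<beta> (Suc m, k)" unfolding P_def by (simp add: sw)
      with False show False by blast
    qed
    then show ?thesis using False unfolding x_def using module.scale_zero_right[OF md] by simp
  qed
  have "P a (0,0)" by (simp add: P_def)
  hence "x a = v" using val[of a 0 0] module.scale_one[OF md] by simp
  hence "x \<noteq> 0" using v by auto
  moreover have "sigma \<phi> x = fun_scale scale r x"
    using step by (auto simp: sigma_def fun_scale_def)
  ultimately show ?thesis unfolding Eigen_def by blast
qed


lemma order_props:
  fixes r :: "'f::field"
  assumes "mult_order r \<noteq> 0"
  shows "mult_order r \<ge> 1 \<and> r ^ mult_order r = 1"
proof -
  have ex: "\<exists>n::nat. n \<ge> 1 \<and> r ^ n = 1" using assms unfolding mult_order_def by presburger
  then have "mult_order r = (LEAST n. n \<ge> 1 \<and> r ^ n = 1)" unfolding mult_order_def by simp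
  then show ?thesis using LeastI_ex[OF ex] by simp
qed

lemma order_dvd:
  fixes r :: "'f::field"
  assumes n: "n \<ge> 1" "r ^ n = 1"
  shows "mult_order r \<noteq> 0 \<and> mult_order r dvd n"
proof -
  have ex: "\<exists>n::nat. n \<ge> 1 \<and> r ^ n = 1" using n by blast
  then have md: "mult_order r = (LEAST n. n \<ge> 1 \<and> r ^ n = 1)" unfolding mult_order_def by simp
  define d where "d = mult_order r"
  have d: "d \<ge> 1" "r ^ d = 1" using LeastI_ex[OF ex] md d_def by auto
  have "r ^ n = r ^ (d * (n div d) + n mod d)" by (subst mult_div_mod_eq) (rule refl)
  also have "\<dots> = (r ^ d) ^ (n div d) * r ^ (n mod d)" by (simp only: power_add power_mult)
  finally have "r ^ n = (r ^ d) ^ (n div d) * r ^ (n mod d)" .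
  hence rm: "r ^ (n mod d) = 1" using d n by simp
  have "n mod d = 0"
  proof (rule ccontr)
    assume "n mod d \<noteq> 0"
    hence "n mod d \<ge> 1" "n mod d < d" using d by auto
    thus False using not_less_Least[of "n mod d" "\<lambda>n. n \<ge> 1 \<and> r ^ n = 1"] rm md d_def by auto
  qed
  then show ?thesis using d d_def by auto
qed

lemma per_props:
  assumes "\<theta> \<in> periodic_points \<phi>"
  shows "per \<phi> \<theta> \<ge> 1 \<and> (\<phi>^^per \<phi> \<theta>) \<theta> = \<theta>"
proof -
  have ex: "\<exists>n::nat. n \<ge> 1 \<and> (\<phi>^^n) \<theta> = \<theta>" using assms unfolding periodic_points_def by blast
  show ?thesis using LeastI_ex[OF ex] unfolding per_def by simp
qed

lemma funpow_mult_fix: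
  assumes "(\<phi>^^p) \<theta> = \<theta>"
  shows "(\<phi>^^(p*q)) \<theta> = \<theta>"
proof (induction q)
  case 0 then show ?case by simp
next
  case (Suc q)
  have "(\<phi>^^(p*Suc q)) \<theta> = (\<phi>^^p) ((\<phi>^^(p*q)) \<theta>)" using fp[where f=\<phi> and m=p and n="p*q" and x=\<theta>] by simp
  then show ?case using Suc assms by simp
qed

lemma per_dvd:
  assumes th: "\<theta> \<in> periodic_points \<phi>" and n: "(\<phi>^^n) \<theta> = \<theta>"
  shows "per \<phi> \<theta> dvd n"
proof -
  define p where "p = per \<phi> \<theta>"
  have p: "p \<ge> 1" "(\<phi>^^p) \<theta> = \<theta>" using per_props[OF th] p_def by auto
  have "(\<phi>^^n) \<theta> = (\<phi>^^(n mod p)) ((\<phi>^^(p * (n div p))) \<theta>)"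
    using fp[where f=\<phi> and m="n mod p" and n="p * (n div p)" and x=\<theta>]
    by (simp add: add.commute)
  hence rm: "(\<phi>^^(n mod p)) \<theta> = \<theta>" using funpow_mult_fix[OF p(2)] n by simp
  have "n mod p = 0"
  proof (rule ccontr)
    assume "n mod p \<noteq> 0"
    hence "n mod p \<ge> 1" "n mod p < p" using p by auto
    thus False using not_less_Least[of "n mod p" "\<lambda>n. n \<ge> 1 \<and> (\<phi>^^n) \<theta> = \<theta>"] rm
      unfolding p_def per_def by auto
  qed
  then show ?thesis unfolding p_def by auto
qed

lemma zero_eig:
  fixes scale :: "'f::field \<Rightarrow> 'v::ab_group_add \<Rightarrow> 'v"
    and \<phi> :: "'a \<Rightarrow> 'a"
  assumes vs: "vector_space scale" and v: "\<exists>v::'v. v \<noteq> 0"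
  shows "(0 \<in> Eigen (fun_scale scale) (sigma \<phi>) (UNIV :: ('a \<Rightarrow> 'v) set)) \<longleftrightarrow> range \<phi> \<noteq> UNIV"
proof
  assume "0 \<in> Eigen (fun_scale scale) (sigma \<phi>) (UNIV :: ('a \<Rightarrow> 'v) set)"
  then obtain x :: "'a \<Rightarrow> 'v" where x: "x \<noteq> 0" "sigma \<phi> x = fun_scale scale 0 x"
    unfolding Eigen_def by auto
  have "x (\<phi> \<alpha>) = 0" for \<alpha> using fun_cong[OF x(2), of \<alpha>] vector_space.scale_eq_0_iff[OF vs]
    unfolding sigma_def fun_scale_def by simp
  moreover obtain b where "x b \<noteq> 0" using x(1) by (auto simp: zero_fun_def fun_eq_iff)
  ultimately show "range \<phi> \<noteq> UNIV"
  proof -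
    assume h: "\<And>\<alpha>. x (\<phi> \<alpha>) = 0" "x b \<noteq> 0"
    show ?thesis
    proof
      assume "range \<phi> = UNIV"
      then have "b \<in> range \<phi>" by simp
      then obtain c where "b = \<phi> c" by blast
      then show False using h by simp
    qed
  qed
next
  assume "range \<phi> \<noteq> UNIV"
  then obtain b where b: "b \<notin> range \<phi>" by auto
  obtain v :: 'v where v: "v \<noteq> 0" using v by auto
  define x where "x = (\<lambda>\<beta>. if \<beta> = b then v else (0::'v))"
  have nb: "\<And>\<alpha>. \<phi> \<alpha> \<noteq> b" using b by auto
  have "x \<noteq> 0" using v by (auto simp: x_def fun_eq_iff)
  moreover have "sigma \<phi> x = fun_scale scale 0 x" using nb vector_space.scale_eq_0_iff[OF vs]
    by (auto simp: x_def sigma_def fun_scale_def fun_eq_iff)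
  ultimately show "0 \<in> Eigen (fun_scale scale) (sigma \<phi>) (UNIV :: ('a \<Rightarrow> 'v) set)"
    unfolding Eigen_def by blast
qed

lemma wand_eig:
  fixes scale :: "'f::field \<Rightarrow> 'v::ab_group_add \<Rightarrow> 'v"
    and \<phi> :: "'a \<Rightarrow> 'a"
  assumes vs: "vector_space scale" and v: "\<exists>v::'v. v \<noteq> 0"
    and w: "wandering_points \<phi> \<noteq> {}" and r: "r \<noteq> 0"
  shows "r \<in> Eigen (fun_scale scale) (sigma \<phi>) (UNIV :: ('a \<Rightarrow> 'v) set)"
proof -
  obtain v :: 'v where v: "v \<noteq> 0" using v by auto
  obtain a where a: "inj_on (\<lambda>n::nat. (\<phi> ^^ n) a) {1..}"
    using w unfolding wandering_points_def wandering_def by auto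
  have C: "r^i = r^j" if "(\<phi>^^i) a = (\<phi>^^j) a" for i j
  proof -
    have "(\<phi>^^Suc i) a = (\<phi>^^Suc j) a" using that by simp
    hence "Suc i = Suc j" by (rule inj_onD[OF a]) auto
    thus ?thesis by simp
  qed
  show ?thesis by (rule construct[OF vs v r C])
qed

lemma per_eig:
  fixes scale :: "'f::field \<Rightarrow> 'v::ab_group_add \<Rightarrow> 'v"
    and \<phi> :: "'a \<Rightarrow> 'a"
  assumes vs: "vector_space scale" and v: "\<exists>v::'v. v \<noteq> 0"
    and r: "r \<in> periodic_eigs \<phi>"
  shows "r \<in> Eigen (fun_scale scale) (sigma \<phi>) (UNIV :: ('a \<Rightarrow> 'v) set)"
proof -
  obtain v :: 'v where v: "v \<noteq> 0" using v by auto
  obtain \<theta> where r0: "r \<noteq> 0" and th: "\<theta> \<in> periodic_points \<phi>"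
    and o: "mult_order r \<noteq> 0" "mult_order r dvd per \<phi> \<theta>"
    using r unfolding periodic_eigs_def by auto
  define p where "p = per \<phi> \<theta>"
  have p: "p \<ge> 1" "(\<phi>^^p) \<theta> = \<theta>" using per_props[OF th] p_def by auto
  have rp: "r ^ p = 1"
  proof -
    obtain q where "p = mult_order r * q" using o(2) p_def by auto
    thus ?thesis using order_props[OF o(1)] by (simp add: power_mult)
  qed
  have C0: "r^i = r^j" if "(\<phi>^^i) \<theta> = (\<phi>^^j) \<theta>" "i \<le> j" for i j
  proof -
    have "(\<phi>^^(j + (p-1)*i)) \<theta> = (\<phi>^^((p-1)*i)) ((\<phi>^^j) \<theta>)"
      using fp[where f=\<phi> and m="(p-1)*i" and n=j and x=\<theta>] by (simp add: add.commute)
    also have "\<dots> = (\<phi>^^((p-1)*i)) ((\<phi>^^i) \<theta>)" using that by simp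
    also have "\<dots> = (\<phi>^^(p*i)) \<theta>"
    proof -
      have "(p-1)*i + i = p*i" using p(1) by (cases p) auto
      then show ?thesis using fp[where f=\<phi> and m="(p-1)*i" and n=i and x=\<theta>] by simp
    qed
    also have "\<dots> = \<theta>" using funpow_mult_fix[OF p(2)] by simp
    finally have e1: "(\<phi>^^(j + (p-1)*i)) \<theta> = \<theta>" .
    have "j + (p-1)*i = (j - i) + p*i" using that(2) p(1) by (cases p) auto
    hence "(\<phi>^^(j + (p-1)*i)) \<theta> = (\<phi>^^(j-i)) ((\<phi>^^(p*i)) \<theta>)"
      using fp[where f=\<phi> and m="j-i" and n="p*i" and x=\<theta>] by simp
    hence "(\<phi>^^(j-i)) \<theta> = \<theta>" using e1 funpow_mult_fix[OF p(2)] by simp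
    hence "p dvd (j - i)" using per_dvd[OF th] p_def by simp
    then obtain q where q: "j - i = p * q" by auto
    have "r^j = r^i * r^(j-i)" using that(2) by (simp add: power_add[symmetric])
    also have "\<dots> = r^i" using q rp by (simp add: power_mult)
    finally show ?thesis by simp
  qed
  have C: "r^i = r^j" if "(\<phi>^^i) \<theta> = (\<phi>^^j) \<theta>" for i j
  proof (cases "i \<le> j")
    case True then show ?thesis using C0[OF that] by blast
  next
    case False then have "j \<le> i" by simp
    then show ?thesis using C0[OF that[symmetric]] by simp
  qed
  show ?thesis by (rule construct[OF vs v r0 C])
qed

lemma eig_per:
  fixes scale :: "'f::field \<Rightarrow> 'v::ab_group_add \<Rightarrow> 'v"
    and \<phi> :: "'a \<Rightarrow> 'a"
  assumes vs: "vector_space scale"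
    and w: "wandering_points \<phi> = {}" and r0: "r \<noteq> 0"
    and r: "r \<in> Eigen (fun_scale scale) (sigma \<phi>) (UNIV :: ('a \<Rightarrow> 'v) set)"
  shows "r \<in> periodic_eigs \<phi>"
proof -
  obtain x :: "'a \<Rightarrow> 'v" where x: "x \<noteq> 0" "sigma \<phi> x = fun_scale scale r x"
    using r unfolding Eigen_def by auto
  have e: "x (\<phi> \<alpha>) = scale r (x \<alpha>)" for \<alpha> using fun_cong[OF x(2), of \<alpha>]
    unfolding sigma_def fun_scale_def by simp
  obtain \<alpha> where xa: "x \<alpha> \<noteq> 0" using x(1) by (auto simp: zero_fun_def fun_eq_iff)
  have "\<not> inj_on (\<lambda>n::nat. (\<phi> ^^ n) \<alpha>) {1..}"
    using w unfolding wandering_points_def wandering_def by auto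
  then obtain i j :: nat where ij: "i \<ge> 1" "j \<ge> 1" "i \<noteq> j" "(\<phi>^^i) \<alpha> = (\<phi>^^j) \<alpha>"
    unfolding inj_on_def by auto
  obtain i j :: nat where ij2: "i < j" "(\<phi>^^i) \<alpha> = (\<phi>^^j) \<alpha>"
  proof (cases "i < j")
    case True then show ?thesis using that ij by blast
  next
    case False then show ?thesis using that[of j i] ij by auto
  qed
  define \<theta> where "\<theta> = (\<phi>^^i) \<alpha>"
  have "(\<phi>^^(j-i)) \<theta> = (\<phi>^^j) \<alpha>"
    using fp[where f=\<phi> and m="j-i" and n=i and x=\<alpha>] ij2(1) unfolding \<theta>_def by simp
  hence "(\<phi>^^(j-i)) \<theta> = \<theta>" using ij2 \<theta>_def by simp
  moreover have "j - i \<ge> 1" using ij2(1) by simp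
  ultimately have th: "\<theta> \<in> periodic_points \<phi>" unfolding periodic_points_def by blast
  define p where "p = per \<phi> \<theta>"
  have p: "p \<ge> 1" "(\<phi>^^p) \<theta> = \<theta>" using per_props[OF th] p_def by auto
  have xt: "x \<theta> \<noteq> 0" unfolding \<theta>_def using eig_iter[where scale=scale and x=x and \<phi>=\<phi> and r=r, OF vs e] xa r0
    vector_space.scale_eq_0_iff[OF vs] by simp
  have "x \<theta> = scale (r^p) (x \<theta>)" using eig_iter[where scale=scale and x=x and \<phi>=\<phi> and r=r, OF vs e, of p \<theta>] p(2) by simp
  hence "scale (r^p) (x \<theta>) = scale 1 (x \<theta>)"
    using vector_space.vector_space_assms(4)[OF vs, of "x \<theta>"] by simp
  hence "r^p = 1" using xt vector_space.scale_cancel_right[OF vs] by blast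
  hence "mult_order r \<noteq> 0 \<and> mult_order r dvd p" using order_dvd p(1) by blast
  then show ?thesis unfolding periodic_eigs_def using r0 th p_def by blast
qed

theorem corollary2p11:
  fixes scale :: "'f::field \<Rightarrow> 'v::ab_group_add \<Rightarrow> 'v"
    and \<phi> :: "'a \<Rightarrow> 'a"
  assumes "vector_space scale"
    and "\<exists>v::'v. v \<noteq> 0"
  shows "(wandering_points \<phi> = {} \<and> range \<phi> = UNIV \<longrightarrow>
            Eigen (fun_scale scale) (sigma \<phi>) (UNIV :: ('a \<Rightarrow> 'v) set) = periodic_eigs \<phi>)
       \<and> (wandering_points \<phi> = {} \<and> range \<phi> \<noteq> UNIV \<longrightarrow>
            Eigen (fun_scale scale) (sigma \<phi>) (UNIV :: ('a \<Rightarrow> 'v) set) = periodic_eigs \<phi> \<union> {0})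
       \<and> (wandering_points \<phi> \<noteq> {} \<and> range \<phi> = UNIV \<longrightarrow>
            Eigen (fun_scale scale) (sigma \<phi>) (UNIV :: ('a \<Rightarrow> 'v) set) = UNIV - {0})
       \<and> (wandering_points \<phi> \<noteq> {} \<and> range \<phi> \<noteq> UNIV \<longrightarrow>
            Eigen (fun_scale scale) (sigma \<phi>) (UNIV :: ('a \<Rightarrow> 'v) set) = UNIV)"
proof -
  let ?E = "Eigen (fun_scale scale) (sigma \<phi>) (UNIV :: ('a \<Rightarrow> 'v) set)"
  have z: "0 \<in> ?E \<longleftrightarrow> range \<phi> \<noteq> UNIV" by (rule zero_eig[OF assms])
  have pe: "r \<in> ?E" if "r \<in> periodic_eigs \<phi>" for r using per_eig[OF assms that] .
  have p0: "0 \<notin> periodic_eigs \<phi>" unfolding periodic_eigs_def by simp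
  have ep: "r \<in> periodic_eigs \<phi>" if "wandering_points \<phi> = {}" "r \<in> ?E" "r \<noteq> 0" for r
    using eig_per[OF assms(1) that(1) that(3) that(2)] .
  have we: "r \<in> ?E" if "wandering_points \<phi> \<noteq> {}" "r \<noteq> 0" for r
    using wand_eig[OF assms that] .
  show ?thesis
  proof (intro conjI impI)
    assume h: "wandering_points \<phi> = {} \<and> range \<phi> = UNIV"
    show "?E = periodic_eigs \<phi>"
    proof (rule set_eqI)
      fix r show "r \<in> ?E \<longleftrightarrow> r \<in> periodic_eigs \<phi>"
      proof (cases "r = 0")
        case True then show ?thesis using z p0 h by simp
      next
        case False then show ?thesis using ep[of r] pe[of r] h by blast
      qed
    qed
  next
    assume h: "wandering_points \<phi> = {} \<and> range \<phi> \<noteq> UNIV"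
    show "?E = periodic_eigs \<phi> \<union> {0}"
    proof (rule set_eqI)
      fix r show "r \<in> ?E \<longleftrightarrow> r \<in> periodic_eigs \<phi> \<union> {0}"
      proof (cases "r = 0")
        case True then show ?thesis using z h by simp
      next
        case False then show ?thesis using ep[of r] pe[of r] h by blast
      qed
    qed
  next
    assume h: "wandering_points \<phi> \<noteq> {} \<and> range \<phi> = UNIV"
    show "?E = UNIV - {0}"
    proof (rule set_eqI)
      fix r show "r \<in> ?E \<longleftrightarrow> r \<in> UNIV - {0}"
      proof (cases "r = 0")
        case True then show ?thesis using z h by simp
      next
        case False then show ?thesis using we[of r] h by blast
      qed
    qed
  next
    assume h: "wandering_points \<phi> \<noteq> {} \<and> range \<phi> \<noteq> UNIV"
    show "?E = UNIV"
    proof (rule set_eqI)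
      fix r show "r \<in> ?E \<longleftrightarrow> r \<in> UNIV"
      proof (cases "r = 0")
        case True then show ?thesis using z h by simp
      next
        case False then show ?thesis using we[of r] h by blast
      qed
    qed
  qed
qed

end
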